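(* Fix $r>0$ and $\phi,\phi_0\in[0,2\pi)$. For $z\in\mathbb C$ define $$s(z)=\frac{1}{2\pi}\Big(p_{R|R_0}(r\mid z)+\sum_{m\in\mathbb Z\setminus\{0\}}C_m(r,z)\,e^{jm(\phi-\phi_0-\gamma z^2\mathcal L)}\Big).$$ Here $p_{R|R_0}(r\mid z)=\frac{2r}{\sigma^2\mathcal L}e^{-\frac{r^2+z^2}{\sigma^2\mathcal L}}I_0\big(\frac{2rz}{\sigma^2\mathcal L}\big)$. For $m\ge1$, $C_m(r,z)=r b_m e^{-a_m(r^2+z^2)}I_m(2b_m zr)$, and $C_{-m}(r,z)=r\overline{b_m}e^{-\overline{a_m}(r^2+z^2)}I_m(2\overline{b_m}zr)$. Then the series converges uniformly on every bounded subset of $\mathbb C$, and $s$ is an entire function of $z$. For real $z=r_0\ge0$, $s(r_0)=p(r,\phi\mid r_0,\phi_0)$.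
   Context: Fix constants $\gamma>0$, $\sigma>0$, $\mathcal L>0$, and let $j=\sqrt{-1}$. For $m\in\mathbb N$ define $$a_m=\frac{\sqrt{jm\gamma}}{\sigma}\coth\!\big(\sqrt{jm\gamma\sigma^2}\,\mathcal L\big),\qquad b_m=\frac{\sqrt{jm\gamma}}{\sigma}\,\frac{1}{\sinh\!\big(\sqrt{jm\gamma\sigma^2}\,\mathcal L\big)},$$ with principal square roots. $I_m$ denotes the modified Bessel function of the first kind of order $m$, and $\overline{w}$ denotes the complex conjugate of $w$. The PZD channel conditional density (input polar coordinates $(r_0,\phi_0)$, output polar coordinates $(r,\phi)$) is $$p(r,\phi\mid r_0,\phi_0)=\frac{1}{2\pi}p_{R|R_0}(r\mid r_0)+\frac1\pi\sum_{m\ge1}\Re\!\Big(C_m(r,r_0)\,e^{jm(\phi-\phi_0-\gamma r_0^2\mathcal L)}\Big),$$ with $p_{R|R_0}$ and $C_m$ ($m\ge1$) as in the claim evaluated at real $z=r_0$. *)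

theory Defs
  imports "HOL-Analysis.Analysis"
begin

definition besselI :: "nat \<Rightarrow> 'a::{real_normed_field,banach} \<Rightarrow> 'a" where
  "besselI m w = (\<Sum>k. (w / 2) ^ (2 * k + m) / of_nat (fact k * fact (k + m)))"

definition ccoth :: "complex \<Rightarrow> complex" where
  "ccoth w = cosh w / sinh w"

definition am :: "real \<Rightarrow> real \<Rightarrow> real \<Rightarrow> nat \<Rightarrow> complex" where
  "am \<gamma> \<sigma> L m = csqrt (\<i> * of_nat m * of_real \<gamma>) / of_real \<sigma>
      * ccoth (csqrt (\<i> * of_nat m * of_real \<gamma> * of_real (\<sigma>^2)) * of_real L)"

definition bm :: "real \<Rightarrow> real \<Rightarrow> real \<Rightarrow> nat \<Rightarrow> complex" where
  "bm \<gamma> \<sigma> L m = csqrt (\<i> * of_nat m * of_real \<gamma>) / of_real \<sigma>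
      * (1 / sinh (csqrt (\<i> * of_nat m * of_real \<gamma> * of_real (\<sigma>^2)) * of_real L))"

definition pRR0 :: "real \<Rightarrow> real \<Rightarrow> real \<Rightarrow> 'a::{real_normed_field,banach} \<Rightarrow> 'a" where
  "pRR0 \<sigma> L r z = of_real (2 * r / (\<sigma>^2 * L))
      * exp (- (of_real (r^2) + z^2) / of_real (\<sigma>^2 * L))
      * besselI 0 (of_real (2 * r / (\<sigma>^2 * L)) * z)"

definition Cpos :: "real \<Rightarrow> real \<Rightarrow> real \<Rightarrow> nat \<Rightarrow> real \<Rightarrow> complex \<Rightarrow> complex" where
  "Cpos \<gamma> \<sigma> L m r z = of_real r * bm \<gamma> \<sigma> L m
      * exp (- am \<gamma> \<sigma> L m * (of_real (r^2) + z^2))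
      * besselI m (2 * bm \<gamma> \<sigma> L m * z * of_real r)"

definition Cneg :: "real \<Rightarrow> real \<Rightarrow> real \<Rightarrow> nat \<Rightarrow> real \<Rightarrow> complex \<Rightarrow> complex" where
  "Cneg \<gamma> \<sigma> L m r z = of_real r * cnj (bm \<gamma> \<sigma> L m)
      * exp (- cnj (am \<gamma> \<sigma> L m) * (of_real (r^2) + z^2))
      * besselI m (2 * cnj (bm \<gamma> \<sigma> L m) * z * of_real r)"

definition Tpos :: "real \<Rightarrow> real \<Rightarrow> real \<Rightarrow> real \<Rightarrow> real \<Rightarrow> real \<Rightarrow> nat \<Rightarrow> complex \<Rightarrow> complex" where
  "Tpos \<gamma> \<sigma> L r \<phi> \<phi>0 m z = Cpos \<gamma> \<sigma> L m r z
      * exp (\<i> * of_nat m * (of_real \<phi> - of_real \<phi>0 - of_real \<gamma> * z^2 * of_real L))"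

definition Tneg :: "real \<Rightarrow> real \<Rightarrow> real \<Rightarrow> real \<Rightarrow> real \<Rightarrow> real \<Rightarrow> nat \<Rightarrow> complex \<Rightarrow> complex" where
  "Tneg \<gamma> \<sigma> L r \<phi> \<phi>0 m z = Cneg \<gamma> \<sigma> L m r z
      * exp (\<i> * (- of_nat m) * (of_real \<phi> - of_real \<phi>0 - of_real \<gamma> * z^2 * of_real L))"

text \<open>The function s(z); the bilateral sum over m \<noteq> 0 is split into m \<ge> 1 and m \<le> -1.\<close>
definition sfun :: "real \<Rightarrow> real \<Rightarrow> real \<Rightarrow> real \<Rightarrow> real \<Rightarrow> real \<Rightarrow> complex \<Rightarrow> complex" where
  "sfun \<gamma> \<sigma> L r \<phi> \<phi>0 z = 1 / (2 * of_real pi) *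
      (pRR0 \<sigma> L r z + (\<Sum>m. Tpos \<gamma> \<sigma> L r \<phi> \<phi>0 (Suc m) z)
                     + (\<Sum>m. Tneg \<gamma> \<sigma> L r \<phi> \<phi>0 (Suc m) z))"

definition pchan :: "real \<Rightarrow> real \<Rightarrow> real \<Rightarrow> real \<Rightarrow> real \<Rightarrow> real \<Rightarrow> real \<Rightarrow> real" where
  "pchan \<gamma> \<sigma> L r \<phi> r0 \<phi>0 = 1 / (2 * pi) * pRR0 \<sigma> L r r0
      + 1 / pi * (\<Sum>m. Re (Cpos \<gamma> \<sigma> L (Suc m) r (of_real r0)
          * exp (\<i> * of_nat (Suc m) * of_real (\<phi> - \<phi>0 - \<gamma> * r0^2 * L))))"

end

theory Submission
  imports Defs "HOL-Complex_Analysis.Complex_Analysis"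
begin

lemma bessel_term_bound:
  fixes w :: "'a::{real_normed_field,banach}"
  shows "norm ((w / 2) ^ (2 * k + m) / of_nat (fact k * fact (k + m)))
     \<le> (norm w / 2) ^ m / fact m * (((norm w / 2)^2) ^ k / fact k)"
proof -
  have "norm ((w / 2) ^ (2 * k + m) / of_nat (fact k * fact (k + m)))
      = (norm w / 2) ^ (2 * k + m) / (fact k * fact (k + m))"
    by (simp add: norm_divide norm_power norm_mult)
  also have "\<dots> \<le> (norm w / 2) ^ (2 * k + m) / (fact k * fact m)"
  proof -
    have "fact m \<le> (fact (k+m)::real)" by (rule fact_mono) simp
    then have "fact k * fact m \<le> (fact k * fact (k+m)::real)" by (rule mult_left_mono) simp
    then show ?thesis by (rule divide_left_mono) (auto intro!: mult_pos_pos)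
  qed
  also have "\<dots> = (norm w / 2) ^ m / fact m * (((norm w / 2)^2) ^ k / fact k)"
  proof -
    have e: "(norm w / 2) ^ (2 * k + m) = ((norm w / 2)^2) ^ k * (norm w / 2) ^ m"
      by (simp only: power_add power_mult)
    show ?thesis unfolding e times_divide_times_eq by (rule arg_cong2[where f="(/)"]) (rule mult.commute)+
  qed
  finally show ?thesis .
qed

lemma bessel_bound_summable:
  "summable (\<lambda>k. (x::real) ^ m / fact m * ((x^2) ^ k / fact k))"
proof -
  have "summable (\<lambda>k. inverse (fact k) * (x^2) ^ k)" by (rule summable_exp)
  then show ?thesis by (intro summable_mult) (simp add: field_simps)
qed

lemma bessel_bound_sum:
  "(\<lambda>k. (x::real) ^ m / fact m * ((x^2) ^ k / fact k)) sums (x ^ m / fact m * exp (x^2))"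
proof -
  have "(\<lambda>k. (x^2) ^ k /\<^sub>R fact k) sums exp (x^2)" by (rule exp_converges)
  then show ?thesis by (intro sums_mult) (simp add: field_simps)
qed

lemma besselI_summable_norm:
  fixes w :: "'a::{real_normed_field,banach}"
  shows "summable (\<lambda>k. norm ((w / 2) ^ (2 * k + m) / of_nat (fact k * fact (k + m))))"
proof (rule summable_comparison_test'[OF bessel_bound_summable[of "norm w / 2" m]])
  fix k show "norm (norm ((w / 2) ^ (2 * k + m) / of_nat (fact k * fact (k + m)))) \<le> (norm w / 2) ^ m / fact m * (((norm w / 2)^2) ^ k / fact k)"
    using bessel_term_bound[of w k m] by simp
qed

lemma besselI_summable:
  fixes w :: "'a::{real_normed_field,banach}"
  shows "summable (\<lambda>k. (w / 2) ^ (2 * k + m) / of_nat (fact k * fact (k + m)))"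
  by (rule summable_norm_cancel[OF besselI_summable_norm])

lemma besselI_bound:
  fixes w :: "'a::{real_normed_field,banach}"
  shows "norm (besselI m w) \<le> (norm w / 2) ^ m / fact m * exp ((norm w / 2)^2)"
proof -
  have "norm (besselI m w) \<le> (\<Sum>k. norm ((w / 2) ^ (2 * k + m) / of_nat (fact k * fact (k + m))))"
    unfolding besselI_def by (rule summable_norm[OF besselI_summable_norm])
  also have "\<dots> \<le> (\<Sum>k. (norm w / 2) ^ m / fact m * (((norm w / 2)^2) ^ k / fact k))"
    by (rule suminf_le[OF _ besselI_summable_norm bessel_bound_summable]) (rule bessel_term_bound)
  also have "\<dots> = (norm w / 2) ^ m / fact m * exp ((norm w / 2)^2)"
    by (rule sums_unique[OF bessel_bound_sum, symmetric])
  finally show ?thesis .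
qed

lemma besselI_holo: "besselI m holomorphic_on (UNIV::complex set)"
proof (rule holomorphic_uniform_sequence[where f = "\<lambda>n w. \<Sum>k<n. (w / 2) ^ (2 * k + m) / of_nat (fact k * fact (k + m))"])
  fix n show "(\<lambda>w. \<Sum>k<n. (w / 2) ^ (2 * k + m) / of_nat (fact k * fact (k + m))) holomorphic_on UNIV"
    by (intro holomorphic_intros) (simp, simp only: of_nat_eq_0_iff mult_eq_0_iff fact_nonzero simp_thms)
next
  fix x :: complex
  have "uniform_limit (cball x 1) (\<lambda>n w. \<Sum>k<n. (w / 2) ^ (2 * k + m) / of_nat (fact k * fact (k + m)))
      (\<lambda>w. \<Sum>k. (w / 2) ^ (2 * k + m) / of_nat (fact k * fact (k + m))) sequentially"
  proof (rule Weierstrass_m_test)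
    fix k w assume w: "w \<in> cball x 1"
    have "norm (w - x) \<le> 1" using w by (simp add: dist_norm norm_minus_commute)
    then have "norm w \<le> norm x + 1" using norm_triangle_sub[of w x] by linarith
    have "norm ((w / 2) ^ (2 * k + m) / of_nat (fact k * fact (k + m))) \<le> (norm w / 2) ^ (2 * k + m) / (fact k * fact (k + m))"
      by (simp add: norm_divide norm_power norm_mult)
    also have "\<dots> \<le> ((norm x + 1) / 2) ^ (2 * k + m) / (fact k * fact (k + m))"
      by (intro divide_right_mono power_mono) (use \<open>norm w \<le> _\<close> in auto)
    also have "\<dots> = norm (((of_real (norm x + 1)::complex) / 2) ^ (2 * k + m) / of_nat (fact k * fact (k + m)))"
      by (simp add: norm_divide norm_power norm_mult)
    finally show "norm ((w / 2) ^ (2 * k + m) / of_nat (fact k * fact (k + m))) \<le> norm (((of_real (norm x + 1)::complex) / 2) ^ (2 * k + m) / of_nat (fact k * fact (k + m)))" .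
  next
    show "summable (\<lambda>k. norm (((of_real (norm x + 1)::complex) / 2) ^ (2 * k + m) / of_nat (fact k * fact (k + m))))"
      by (rule besselI_summable_norm)
  qed
  then show "\<exists>d>0. cball x d \<subseteq> UNIV \<and> uniform_limit (cball x d) (\<lambda>n w. \<Sum>k<n. (w / 2) ^ (2 * k + m) / of_nat (fact k * fact (k + m))) (besselI m) sequentially"
    unfolding besselI_def[abs_def] by (intro exI[of _ 1]) auto
qed simp

lemma sinh_norm_lower:
  fixes c :: complex assumes "Re c > 0"
  shows "norm (sinh c) \<ge> (exp (Re c) - 1) / 2"
proof -
  have "norm (sinh c) = norm (exp c - exp (-c)) / 2" by (simp add: sinh_def)
  moreover have "norm (exp c) - norm (exp (-c)) \<le> norm (exp c - exp (-c))" by (rule norm_triangle_ineq2)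
  moreover have "norm (exp (-c)) \<le> 1" using assms by simp
  moreover have "norm (exp c) = exp (Re c)" by simp
  ultimately show ?thesis by argo
qed

lemma cosh_norm_upper:
  fixes c :: complex assumes "Re c > 0"
  shows "norm (cosh c) \<le> (exp (Re c) + 1) / 2"
proof -
  have "norm (cosh c) = norm (exp c + exp (-c)) / 2" by (simp add: cosh_def)
  moreover have "norm (exp c + exp (-c)) \<le> norm (exp c) + norm (exp (-c))" by (rule norm_triangle_ineq)
  moreover have "norm (exp (-c)) \<le> 1" using assms by simp
  moreover have "norm (exp c) = exp (Re c)" by simp
  ultimately show ?thesis by argo
qed

lemma inv_sinh_bound:
  fixes c :: complex assumes u: "Re c > 0"
  shows "norm (1 / sinh c) \<le> 2 / Re c"
proof -
  have "Re c \<le> exp (Re c) - 1" using exp_ge_add_one_self[of "Re c"] by linarith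
  with sinh_norm_lower[OF u] have h: "Re c / 2 \<le> norm (sinh c)" by argo
  then have "norm (sinh c) > 0" using u by linarith
  then show ?thesis using h u by (simp add: norm_divide field_simps)
qed

lemma coth_bound:
  fixes c :: complex assumes u: "Re c > 0"
  shows "norm (ccoth c) \<le> 1 + 2 / Re c"
proof -
  define E where "E = exp (Re c)"
  have E1: "Re c \<le> E - 1" unfolding E_def using exp_ge_add_one_self[of "Re c"] by linarith
  have s: "(E - 1) / 2 \<le> norm (sinh c)" using sinh_norm_lower[OF u] unfolding E_def .
  have ch: "norm (cosh c) \<le> (E + 1) / 2" using cosh_norm_upper[OF u] unfolding E_def .
  have Ep: "E - 1 > 0" using E1 u by linarith
  have "norm (ccoth c) = norm (cosh c) / norm (sinh c)" by (simp add: ccoth_def norm_divide)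
  also have "\<dots> \<le> ((E + 1) / 2) / ((E - 1) / 2)"
    by (rule frac_le) (use ch s Ep in auto)
  also have "\<dots> = 1 + 2 / (E - 1)" using Ep by (simp add: field_simps)
  also have "\<dots> \<le> 1 + 2 / Re c"
    using E1 u by (simp add: frac_le)
  finally show ?thesis .
qed

lemma csqrt_ii_real:
  assumes "t \<ge> 0" shows "Re (csqrt (\<i> * of_real t)) = sqrt (t / 2)"
  using assms by (simp add: norm_mult)

lemma bm_am_bounds:
  fixes \<gamma> \<sigma> L :: real and n :: nat
  assumes g: "\<gamma> > 0" and s: "\<sigma> > 0" and L: "L > 0" and n: "n \<ge> 1"
  shows "norm (bm \<gamma> \<sigma> L n) \<le> 2 * sqrt 2 / (\<sigma>^2 * L)"
    and "norm (am \<gamma> \<sigma> L n) \<le> (sqrt \<gamma> / \<sigma> + 2 * sqrt 2 / (\<sigma>^2 * L)) * real n"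
proof -
  define t where "t = real n * \<gamma> * \<sigma>^2"
  define q where "q = sqrt (real n * \<gamma>)"
  define c where "c = csqrt (\<i> * of_nat n * of_real \<gamma> * of_real (\<sigma>^2)) * of_real L"
  have tpos: "t > 0" using g s n unfolding t_def by auto
  have qpos: "q > 0" using g n unfolding q_def by auto
  have eq: "\<i> * of_nat n * of_real \<gamma> * of_real (\<sigma>^2) = \<i> * (of_real t :: complex)"
    unfolding t_def by simp
  have "Re c = Re (csqrt (\<i> * of_real t)) * L" unfolding c_def eq by (simp del: csqrt.simps)
  then have Rec: "Re c = sqrt (t / 2) * L"
    using csqrt_ii_real[of t] tpos by simp
  have "sqrt (t / 2) * sqrt 2 = q * \<sigma>"
  proof -
    have "sqrt (t / 2) * sqrt 2 = sqrt t" by (simp add: real_sqrt_mult[symmetric])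
    also have "\<dots> = q * \<sigma>" unfolding t_def q_def using s by (simp add: real_sqrt_mult)
    finally show ?thesis .
  qed
  then have Rec2: "Re c = q * \<sigma> * L / sqrt 2" using Rec by (simp add: field_simps)
  have upos: "Re c > 0" using Rec2 qpos s L by simp
  have nw: "norm (csqrt (\<i> * of_nat n * of_real \<gamma>)) = q"
    unfolding q_def using g by (simp add: norm_mult)
  have "norm (bm \<gamma> \<sigma> L n) = q / \<sigma> * norm (1 / sinh c)"
    unfolding bm_def c_def using s g by (simp add: norm_mult norm_divide q_def)
  also have "\<dots> \<le> q / \<sigma> * (2 / Re c)"
    using inv_sinh_bound[OF upos] qpos s by (intro mult_left_mono) auto
  also have "\<dots> = 2 * sqrt 2 / (\<sigma>^2 * L)"
    unfolding Rec2 using qpos s L by (simp add: field_simps power2_eq_square)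
  finally show "norm (bm \<gamma> \<sigma> L n) \<le> 2 * sqrt 2 / (\<sigma>^2 * L)" .
  have "norm (am \<gamma> \<sigma> L n) = q / \<sigma> * norm (ccoth c)"
    unfolding am_def c_def using s g by (simp add: norm_mult norm_divide q_def)
  also have "\<dots> \<le> q / \<sigma> * (1 + 2 / Re c)"
    using coth_bound[OF upos] qpos s by (intro mult_left_mono) auto
  also have "\<dots> = q / \<sigma> + 2 * sqrt 2 / (\<sigma>^2 * L)"
    unfolding Rec2 using qpos s L by (simp add: field_simps power2_eq_square)
  also have "\<dots> \<le> (sqrt \<gamma> / \<sigma> + 2 * sqrt 2 / (\<sigma>^2 * L)) * real n"
  proof -
    have nn: "real n \<le> real n ^ 2"
      by (metis le_square of_nat_le_iff of_nat_mult power2_eq_square)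
    have "sqrt (real n) \<le> sqrt (real n ^ 2)" using nn by (rule real_sqrt_le_mono)
    then have "sqrt (real n) \<le> real n" by simp
    hence "q \<le> sqrt \<gamma> * real n" unfolding q_def using g by (simp add: real_sqrt_mult mult.commute mult_left_mono)
    hence "q / \<sigma> \<le> sqrt \<gamma> / \<sigma> * real n" using s by (simp add: field_simps)
    moreover have "2 * sqrt 2 / (\<sigma>^2 * L) \<le> 2 * sqrt 2 / (\<sigma>^2 * L) * real n"
    proof -
      have x0: "0 \<le> 2 * sqrt 2 / (\<sigma>^2 * L)" using s L by simp
      have "1 \<le> real n" using n by simp
      from mult_left_mono[OF this x0] show ?thesis by simp
    qed
    ultimately show ?thesis by (simp add: distrib_right)
  qed
  finally show "norm (am \<gamma> \<sigma> L n) \<le> (sqrt \<gamma> / \<sigma> + 2 * sqrt 2 / (\<sigma>^2 * L)) * real n" .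
qed

lemma exp_phase_bound:
  fixes t \<phi> \<phi>0 \<gamma> L S :: real and w :: complex
  assumes "norm w \<le> S" "\<gamma> \<ge> 0" "L \<ge> 0"
  shows "norm (exp (\<i> * of_real t * (of_real \<phi> - of_real \<phi>0 - of_real \<gamma> * w * of_real L)))
         \<le> exp (\<bar>t\<bar> * \<gamma> * L * S)"
proof -
  have re: "Re (\<i> * of_real t * (of_real \<phi> - of_real \<phi>0 - of_real \<gamma> * w * of_real L)) = t * \<gamma> * L * Im w"
    by (simp add: algebra_simps)
  have "norm (exp (\<i> * of_real t * (of_real \<phi> - of_real \<phi>0 - of_real \<gamma> * w * of_real L)))
      = exp (Re (\<i> * of_real t * (of_real \<phi> - of_real \<phi>0 - of_real \<gamma> * w * of_real L)))"
    by (rule norm_exp_eq_Re)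
  also have "\<dots> = exp (t * \<gamma> * L * Im w)" by (simp only: re)
  also have "\<dots> \<le> exp (\<bar>t * \<gamma> * L * Im w\<bar>)" by simp
  also have "\<dots> = exp (\<bar>t\<bar> * \<gamma> * L * \<bar>Im w\<bar>)" using assms by (simp add: abs_mult)
  also have "\<dots> \<le> exp (\<bar>t\<bar> * \<gamma> * L * S)"
    using assms abs_Im_le_cmod[of w] by (subst exp_le_cancel_iff) (intro mult_left_mono, auto)
  finally show ?thesis .
qed

lemma term_bound:
  fixes a b z :: complex and r A B0 R :: real
  assumes a: "norm a \<le> A" and b: "norm b \<le> B0" and z: "norm z \<le> R" and r: "r > 0"
  shows "norm (of_real r * b * exp (- a * (of_real (r^2) + z^2)) * besselI n (2 * b * z * of_real r))
    \<le> r * B0 * exp (A * (r^2 + R^2)) * ((B0 * R * r)^n / fact n * exp ((B0*R*r)^2))"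
proof -
  have R0: "R \<ge> 0" using norm_ge_zero[of z] z by linarith
  have B00: "B0 \<ge> 0" using norm_ge_zero[of b] b by linarith
  have A00: "A \<ge> 0" using norm_ge_zero[of a] a by linarith
  have nw: "norm (of_real (r^2) + z^2) \<le> r^2 + R^2"
  proof -
    have "norm (of_real (r^2) + z^2) \<le> norm (of_real (r^2) :: complex) + norm (z^2)" by (rule norm_triangle_ineq)
    also have "\<dots> = r^2 + norm z ^ 2" by (simp add: norm_power)
    also have "\<dots> \<le> r^2 + R^2" using z by (simp add: power_mono)
    finally show ?thesis .
  qed
  have e1: "norm (exp (- a * (of_real (r^2) + z^2))) \<le> exp (A * (r^2 + R^2))"
  proof -
    have "norm (exp (- a * (of_real (r^2) + z^2))) = exp (Re (- a * (of_real (r^2) + z^2)))" by simp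
    also have "\<dots> \<le> exp (norm (- a * (of_real (r^2) + z^2)))"
      by (subst exp_le_cancel_iff) (rule complex_Re_le_cmod)
    also have "\<dots> \<le> exp (A * (r^2 + R^2))"
    proof (subst exp_le_cancel_iff)
      have "norm (- a * (of_real (r^2) + z^2)) = norm a * norm (of_real (r^2) + z^2)"
        by (simp only: norm_mult norm_minus_cancel)
      also have "\<dots> \<le> A * (r^2 + R^2)" by (rule mult_mono[OF a nw A00 norm_ge_zero])
      finally show "norm (- a * (of_real (r^2) + z^2)) \<le> A * (r^2 + R^2)" .
    qed
    finally show ?thesis .
  qed
  have xb: "norm (2 * b * z * of_real r) / 2 \<le> B0 * R * r"
  proof -
    have "norm (2 * b * z * of_real r) / 2 = norm b * norm z * r" using r by (simp add: norm_mult)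
    also have "\<dots> \<le> B0 * R * r"
      by (rule mult_right_mono[OF mult_mono[OF b z B00 norm_ge_zero]]) (use r in simp)
    finally show ?thesis .
  qed
  have e2: "norm (besselI n (2 * b * z * of_real r)) \<le> (B0 * R * r)^n / fact n * exp ((B0*R*r)^2)"
  proof -
    have "norm (besselI n (2 * b * z * of_real r)) \<le> (norm (2 * b * z * of_real r) / 2) ^ n / fact n * exp ((norm (2 * b * z * of_real r) / 2)^2)"
      by (rule besselI_bound)
    also have "\<dots> \<le> (B0 * R * r)^n / fact n * exp ((B0*R*r)^2)"
    proof -
      have x0: "0 \<le> norm (2 * b * z * of_real r) / 2" by simp
      have p1: "(norm (2 * b * z * of_real r) / 2) ^ n \<le> (B0 * R * r) ^ n" by (rule power_mono[OF xb x0])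
      have p2: "exp ((norm (2 * b * z * of_real r) / 2)^2) \<le> exp ((B0 * R * r)^2)"
        by (subst exp_le_cancel_iff) (rule power_mono[OF xb x0])
      have p3: "(norm (2 * b * z * of_real r) / 2) ^ n / fact n \<le> (B0 * R * r) ^ n / fact n"
        by (rule divide_right_mono[OF p1]) simp
      have p4: "0 \<le> (B0 * R * r) ^ n / fact n" using B00 R0 r by simp
      show ?thesis by (rule mult_mono[OF p3 p2 p4]) simp
    qed
    finally show ?thesis .
  qed
  have "norm (of_real r * b * exp (- a * (of_real (r^2) + z^2)) * besselI n (2 * b * z * of_real r))
     = r * norm b * norm (exp (- a * (of_real (r^2) + z^2))) * norm (besselI n (2 * b * z * of_real r))"
    using r by (simp add: norm_mult)
  also have "\<dots> \<le> r * B0 * exp (A * (r^2 + R^2)) * ((B0 * R * r)^n / fact n * exp ((B0*R*r)^2))"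
  proof -
    have m1: "r * norm b \<le> r * B0" using b r by simp
    have m2: "r * norm b * norm (exp (- a * (of_real (r^2) + z^2))) \<le> r * B0 * exp (A * (r^2 + R^2))"
      by (rule mult_mono[OF m1 e1]) (use r B00 in simp_all)
    show ?thesis
      by (rule mult_mono[OF m2 e2]) (use r B00 in simp_all)
  qed
  finally show ?thesis .
qed

lemma T_gen_bound:
  fixes a b z :: complex and r A0 B0 R t \<gamma> L \<phi> \<phi>0 :: real
  assumes a: "norm a \<le> A0 * real n" and b: "norm b \<le> B0" and z: "norm z \<le> R" and r: "r > 0"
    and t: "\<bar>t\<bar> = real n" and g: "\<gamma> \<ge> 0" and L: "L \<ge> 0"
  shows "norm (of_real r * b * exp (- a * (of_real (r^2) + z^2)) * besselI n (2 * b * z * of_real r)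
           * exp (\<i> * of_real t * (of_real \<phi> - of_real \<phi>0 - of_real \<gamma> * z^2 * of_real L)))
    \<le> (r * B0 * exp ((B0*R*r)^2)) * (B0 * R * r * exp (A0 * (r^2 + R^2)) * exp (\<gamma> * L * R^2)) ^ n / fact n"
proof -
  have nz: "norm (z^2) \<le> R^2" using z by (simp add: norm_power power_mono)
  have "norm (of_real r * b * exp (- a * (of_real (r^2) + z^2)) * besselI n (2 * b * z * of_real r)
           * exp (\<i> * of_real t * (of_real \<phi> - of_real \<phi>0 - of_real \<gamma> * z^2 * of_real L)))
    = norm (of_real r * b * exp (- a * (of_real (r^2) + z^2)) * besselI n (2 * b * z * of_real r))
      * norm (exp (\<i> * of_real t * (of_real \<phi> - of_real \<phi>0 - of_real \<gamma> * z^2 * of_real L)))"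
    by (rule norm_mult)
  also have "\<dots> \<le> (r * B0 * exp (A0 * real n * (r^2 + R^2)) * ((B0 * R * r)^n / fact n * exp ((B0*R*r)^2)))
       * exp (\<bar>t\<bar> * \<gamma> * L * R^2)"
  proof -
    have R0: "R \<ge> 0" using norm_ge_zero[of z] z by linarith
    have B00: "B0 \<ge> 0" using norm_ge_zero[of b] b by linarith
    have t1: "norm (of_real r * b * exp (- a * (of_real (r^2) + z^2)) * besselI n (2 * b * z * of_real r))
       \<le> r * B0 * exp (A0 * real n * (r^2 + R^2)) * ((B0 * R * r)^n / fact n * exp ((B0*R*r)^2))"
      by (rule term_bound[OF a b z r])
    have t2: "norm (exp (\<i> * of_real t * (of_real \<phi> - of_real \<phi>0 - of_real \<gamma> * z^2 * of_real L)))
       \<le> exp (\<bar>t\<bar> * \<gamma> * L * R^2)"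
      by (rule exp_phase_bound[OF nz g L])
    have "0 \<le> r * B0 * exp (A0 * real n * (r^2 + R^2)) * ((B0 * R * r)^n / fact n * exp ((B0*R*r)^2))"
      using R0 B00 r by simp
    from mult_mono[OF t1 t2 this norm_ge_zero] show ?thesis .
  qed
  also have "\<dots> = (r * B0 * exp ((B0*R*r)^2)) * (B0 * R * r * exp (A0 * (r^2 + R^2)) * exp (\<gamma> * L * R^2)) ^ n / fact n"
  proof -
    have "exp (A0 * real n * (r^2 + R^2)) = exp (of_nat n * (A0 * (r^2 + R^2)))"
      by (simp add: mult_ac)
    also have "\<dots> = exp (A0 * (r^2 + R^2)) ^ n" by (rule exp_of_nat_mult)
    finally have e1: "exp (A0 * real n * (r^2 + R^2)) = exp (A0 * (r^2 + R^2)) ^ n" .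
    have "exp (\<bar>t\<bar> * \<gamma> * L * R^2) = exp (of_nat n * (\<gamma> * L * R^2))"
      unfolding t by (simp add: mult_ac)
    also have "\<dots> = exp (\<gamma> * L * R^2) ^ n" by (rule exp_of_nat_mult)
    finally have e2: "exp (\<bar>t\<bar> * \<gamma> * L * R^2) = exp (\<gamma> * L * R^2) ^ n" .
    show ?thesis unfolding e1 e2 power_mult_distrib by (simp add: mult_ac)
  qed
  finally show ?thesis .
qed

definition "B0c \<sigma> L = 2 * sqrt 2 / (\<sigma>^2 * L)"
definition "A0c \<gamma> \<sigma> L = sqrt \<gamma> / \<sigma> + B0c \<sigma> L"
definition "Cc \<sigma> L r R = r * B0c \<sigma> L * exp ((B0c \<sigma> L * R * r)^2)"
definition "Yc \<gamma> \<sigma> L r R = B0c \<sigma> L * R * r * exp (A0c \<gamma> \<sigma> L * (r^2 + R^2)) * exp (\<gamma> * L * R^2)"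

lemma Tpos_bound:
  assumes g: "\<gamma> > 0" and s: "\<sigma> > 0" and L: "L > 0" and r: "r > 0" and z: "norm z \<le> R" and n: "n \<ge> 1"
  shows "norm (Tpos \<gamma> \<sigma> L r \<phi> \<phi>0 n z) \<le> Cc \<sigma> L r R * Yc \<gamma> \<sigma> L r R ^ n / fact n"
proof -
  have eq: "Tpos \<gamma> \<sigma> L r \<phi> \<phi>0 n z = of_real r * bm \<gamma> \<sigma> L n * exp (- am \<gamma> \<sigma> L n * (of_real (r^2) + z^2))
      * besselI n (2 * bm \<gamma> \<sigma> L n * z * of_real r)
      * exp (\<i> * of_real (real n) * (of_real \<phi> - of_real \<phi>0 - of_real \<gamma> * z^2 * of_real L))"
    by (simp add: Tpos_def Cpos_def)
  show ?thesis unfolding eq Cc_def Yc_def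
    by (rule T_gen_bound) (use bm_am_bounds[OF g s L n] g L r z in \<open>auto simp: A0c_def B0c_def\<close>)
qed

lemma Tneg_bound:
  assumes g: "\<gamma> > 0" and s: "\<sigma> > 0" and L: "L > 0" and r: "r > 0" and z: "norm z \<le> R" and n: "n \<ge> 1"
  shows "norm (Tneg \<gamma> \<sigma> L r \<phi> \<phi>0 n z) \<le> Cc \<sigma> L r R * Yc \<gamma> \<sigma> L r R ^ n / fact n"
proof -
  have eq: "Tneg \<gamma> \<sigma> L r \<phi> \<phi>0 n z = of_real r * cnj (bm \<gamma> \<sigma> L n) * exp (- cnj (am \<gamma> \<sigma> L n) * (of_real (r^2) + z^2))
      * besselI n (2 * cnj (bm \<gamma> \<sigma> L n) * z * of_real r)
      * exp (\<i> * of_real (- real n) * (of_real \<phi> - of_real \<phi>0 - of_real \<gamma> * z^2 * of_real L))"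
    by (simp add: Tneg_def Cneg_def)
  show ?thesis unfolding eq Cc_def Yc_def
    by (rule T_gen_bound) (use bm_am_bounds[OF g s L n] g L r z in \<open>auto simp: A0c_def B0c_def\<close>)
qed

lemma summable_bound: "summable (\<lambda>m. C * Y ^ Suc m / fact (Suc m) :: real)"
proof -
  have "summable (\<lambda>m. inverse (fact (Suc m)) * Y ^ Suc m :: real)"
    using summable_exp[of Y] by (subst summable_Suc_iff)
  then have "summable (\<lambda>m. C * (inverse (fact (Suc m)) * Y ^ Suc m) :: real)" by (rule summable_mult)
  then show ?thesis by (simp add: divide_inverse mult_ac)
qed

lemma besselI_holo_comp [holomorphic_intros]:
  "f holomorphic_on S \<Longrightarrow> (\<lambda>z. besselI m (f z)) holomorphic_on S"
  using holomorphic_on_compose[of f S "besselI m"] holomorphic_on_subset[OF besselI_holo[of m]]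
  by (simp add: o_def)

lemma Tpos_holo: "Tpos \<gamma> \<sigma> L r \<phi> \<phi>0 n holomorphic_on UNIV"
  unfolding Tpos_def[abs_def] Cpos_def by (intro holomorphic_intros)

lemma Tneg_holo: "Tneg \<gamma> \<sigma> L r \<phi> \<phi>0 n holomorphic_on UNIV"
  unfolding Tneg_def[abs_def] Cneg_def by (intro holomorphic_intros)

lemma pRR0_holo: "(\<lambda>z::complex. pRR0 \<sigma> L r z) holomorphic_on UNIV"
  unfolding pRR0_def by (intro holomorphic_intros) auto

lemma series_facts:
  fixes T :: "nat \<Rightarrow> complex \<Rightarrow> complex"
  assumes hol: "\<And>n. T n holomorphic_on UNIV"
    and bnd: "\<And>R z n. norm z \<le> R \<Longrightarrow> n \<ge> 1 \<Longrightarrow> norm (T n z) \<le> CC R * YY R ^ n / fact n"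
  shows "\<And>B. bounded B \<Longrightarrow> uniformly_convergent_on B (\<lambda>N z. \<Sum>m<N. T (Suc m) z)"
    and "(\<lambda>z. \<Sum>m. T (Suc m) z) holomorphic_on UNIV"
    and "\<And>z. summable (\<lambda>m. T (Suc m) z)"
proof -
  fix B :: "complex set" assume "bounded B"
  then obtain R where R: "\<And>z. z \<in> B \<Longrightarrow> norm z \<le> R" by (auto simp: bounded_iff)
  show "uniformly_convergent_on B (\<lambda>N z. \<Sum>m<N. T (Suc m) z)"
    by (rule Weierstrass_m_test'_ev[OF always_eventually summable_bound[of "CC R" "YY R"]])
       (intro allI ballI bnd R; simp)
next
  show "(\<lambda>z. \<Sum>m. T (Suc m) z) holomorphic_on UNIV"
  proof (rule holomorphic_uniform_sequence[where f = "\<lambda>N z. \<Sum>m<N. T (Suc m) z"])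
    fix n show "(\<lambda>z. \<Sum>m<n. T (Suc m) z) holomorphic_on UNIV"
      by (intro holomorphic_intros holomorphic_on_sum) (rule hol)
  next
    fix x :: complex
    have "uniform_limit (cball x 1) (\<lambda>N z. \<Sum>m<N. T (Suc m) z) (\<lambda>z. \<Sum>m. T (Suc m) z) sequentially"
    proof (rule Weierstrass_m_test[OF _ summable_bound[of "CC (norm x + 1)" "YY (norm x + 1)"]])
      fix n z assume z: "z \<in> cball x 1"
      have "norm z \<le> norm x + 1" using z norm_triangle_sub[of z x] by (auto simp: dist_norm norm_minus_commute)
      then show "norm (T (Suc n) z) \<le> CC (norm x + 1) * YY (norm x + 1) ^ Suc n / fact (Suc n)"
        by (intro bnd) auto
    qed
    then show "\<exists>d>0. cball x d \<subseteq> UNIV \<and> uniform_limit (cball x d) (\<lambda>N z. \<Sum>m<N. T (Suc m) z) (\<lambda>z. \<Sum>m. T (Suc m) z) sequentially"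
      by (intro exI[of _ 1]) auto
  qed simp
next
  fix z :: complex
  show "summable (\<lambda>m. T (Suc m) z)"
    by (rule summable_comparison_test'[OF summable_bound[of "CC (norm z)" "YY (norm z)"]])
       (intro bnd, auto)
qed

lemma besselI_of_real: "besselI m (of_real x :: complex) = of_real (besselI m x)"
proof -
  have "besselI m (of_real x::complex) = (\<Sum>k. of_real ((x / 2) ^ (2 * k + m) / of_nat (fact k * fact (k + m))))"
    unfolding besselI_def by simp
  also have "\<dots> = of_real (\<Sum>k. (x / 2) ^ (2 * k + m) / of_nat (fact k * fact (k + m)))"
    by (rule suminf_of_real[OF besselI_summable, symmetric])
  finally show ?thesis by (simp add: besselI_def)
qed

lemma besselI_cnj: "cnj (besselI m w) = besselI m (cnj w)"
proof -
  have "(\<lambda>k. cnj ((w / 2) ^ (2 * k + m) / of_nat (fact k * fact (k + m)))) sums cnj (besselI m w)"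
    unfolding besselI_def by (subst sums_cnj) (rule summable_sums[OF besselI_summable])
  then have "(\<lambda>k. (cnj w / 2) ^ (2 * k + m) / of_nat (fact k * fact (k + m))) sums cnj (besselI m w)"
    by simp
  then show ?thesis unfolding besselI_def by (simp add: sums_iff)
qed

lemma pRR0_real: "pRR0 \<sigma> L r (of_real r0 :: complex) = of_real (pRR0 \<sigma> L r r0)"
  by (simp add: pRR0_def exp_of_real[symmetric] besselI_of_real[symmetric])

lemma Tneg_cnj: "Tneg \<gamma> \<sigma> L r \<phi> \<phi>0 n (of_real r0) = cnj (Tpos \<gamma> \<sigma> L r \<phi> \<phi>0 n (of_real r0))"
  by (simp add: Tpos_def Tneg_def Cpos_def Cneg_def exp_cnj besselI_cnj)

lemma Tpos_real: "Tpos \<gamma> \<sigma> L r \<phi> \<phi>0 n (of_real r0) =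
   Cpos \<gamma> \<sigma> L n r (of_real r0) * exp (\<i> * of_nat n * of_real (\<phi> - \<phi>0 - \<gamma> * r0^2 * L))"
  by (simp add: Tpos_def)

theorem mainTheorem12:
  fixes \<gamma> \<sigma> L r \<phi> \<phi>0 :: real
  assumes "\<gamma> > 0" and "\<sigma> > 0" and "L > 0" and "r > 0"
    and "\<phi> \<in> {0..<2*pi}" and "\<phi>0 \<in> {0..<2*pi}"
  shows "(\<forall>B::complex set. bounded B \<longrightarrow>
            uniformly_convergent_on B (\<lambda>N z. \<Sum>m<N. Tpos \<gamma> \<sigma> L r \<phi> \<phi>0 (Suc m) z) \<and>
            uniformly_convergent_on B (\<lambda>N z. \<Sum>m<N. Tneg \<gamma> \<sigma> L r \<phi> \<phi>0 (Suc m) z))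
       \<and> sfun \<gamma> \<sigma> L r \<phi> \<phi>0 holomorphic_on UNIV
       \<and> (\<forall>r0::real. r0 \<ge> 0 \<longrightarrow>
            sfun \<gamma> \<sigma> L r \<phi> \<phi>0 (of_real r0) = of_real (pchan \<gamma> \<sigma> L r \<phi> r0 \<phi>0))"
proof -
  note g = assms(1) and s = assms(2) and LL = assms(3) and rr = assms(4)
  note hp = series_facts[of "Tpos \<gamma> \<sigma> L r \<phi> \<phi>0" "Cc \<sigma> L r" "Yc \<gamma> \<sigma> L r",
      OF Tpos_holo Tpos_bound[OF g s LL rr]]
  note hn = series_facts[of "Tneg \<gamma> \<sigma> L r \<phi> \<phi>0" "Cc \<sigma> L r" "Yc \<gamma> \<sigma> L r",
      OF Tneg_holo Tneg_bound[OF g s LL rr]]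
  have P1: "\<forall>B::complex set. bounded B \<longrightarrow>
            uniformly_convergent_on B (\<lambda>N z. \<Sum>m<N. Tpos \<gamma> \<sigma> L r \<phi> \<phi>0 (Suc m) z) \<and>
            uniformly_convergent_on B (\<lambda>N z. \<Sum>m<N. Tneg \<gamma> \<sigma> L r \<phi> \<phi>0 (Suc m) z)"
    using hp(1) hn(1) by blast
  have sf: "sfun \<gamma> \<sigma> L r \<phi> \<phi>0 = (\<lambda>z. 1 / (2 * of_real pi) *
      (pRR0 \<sigma> L r z + (\<Sum>m. Tpos \<gamma> \<sigma> L r \<phi> \<phi>0 (Suc m) z)
                     + (\<Sum>m. Tneg \<gamma> \<sigma> L r \<phi> \<phi>0 (Suc m) z)))"
    by (rule ext) (simp only: sfun_def)
  have P2: "sfun \<gamma> \<sigma> L r \<phi> \<phi>0 holomorphic_on UNIV"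
    unfolding sf by (intro holomorphic_intros pRR0_holo hp(2) hn(2))
  have P3: "sfun \<gamma> \<sigma> L r \<phi> \<phi>0 (of_real r0) = of_real (pchan \<gamma> \<sigma> L r \<phi> r0 \<phi>0)" for r0 :: real
  proof -
    define S where "S = (\<Sum>m. Tpos \<gamma> \<sigma> L r \<phi> \<phi>0 (Suc m) (of_real r0))"
    have sT: "summable (\<lambda>m. Tpos \<gamma> \<sigma> L r \<phi> \<phi>0 (Suc m) (of_real r0))" by (rule hp(3))
    have "(\<lambda>m. cnj (Tpos \<gamma> \<sigma> L r \<phi> \<phi>0 (Suc m) (of_real r0))) sums cnj S"
      unfolding S_def by (subst sums_cnj) (rule summable_sums[OF sT])
    then have "(\<lambda>m. Tneg \<gamma> \<sigma> L r \<phi> \<phi>0 (Suc m) (of_real r0)) sums cnj S"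
      by (simp add: Tneg_cnj)
    then have S2: "(\<Sum>m. Tneg \<gamma> \<sigma> L r \<phi> \<phi>0 (Suc m) (of_real r0)) = cnj S"
      by (rule sums_unique[symmetric])
    have reS: "Re S = (\<Sum>m. Re (Cpos \<gamma> \<sigma> L (Suc m) r (of_real r0)
          * exp (\<i> * of_nat (Suc m) * of_real (\<phi> - \<phi>0 - \<gamma> * r0^2 * L))))"
    proof -
      have "Re S = (\<Sum>m. Re (Tpos \<gamma> \<sigma> L r \<phi> \<phi>0 (Suc m) (of_real r0)))"
        unfolding S_def by (rule Re_suminf[OF sT])
      then show ?thesis by (simp only: Tpos_real)
    qed
    have pc: "pchan \<gamma> \<sigma> L r \<phi> r0 \<phi>0 = 1 / (2 * pi) * (pRR0 \<sigma> L r r0 + 2 * Re S)"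
      unfolding pchan_def reS[symmetric] by (simp add: field_simps)
    have "sfun \<gamma> \<sigma> L r \<phi> \<phi>0 (of_real r0) = 1 / (2 * of_real pi) * (of_real (pRR0 \<sigma> L r r0) + (S + cnj S))"
      unfolding sf S2 pRR0_real S_def by (simp add: add.assoc)
    also have "\<dots> = 1 / (2 * of_real pi) * (of_real (pRR0 \<sigma> L r r0) + of_real (2 * Re S))"
      by (simp only: complex_add_cnj)
    also have "\<dots> = of_real (pchan \<gamma> \<sigma> L r \<phi> r0 \<phi>0)"
      unfolding pc by simp
    finally show ?thesis .
  qed
  show ?thesis using P1 P2 P3 by blast
qed

end
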